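(* Let $j\ge1$ and $s\ge j$ be integers, write $s=qj+r$ with integers $q\ge1$ and $0\le r<j$, and let $\alpha=\sum_{i=0}^{q-1}(r+ij+1)$. Then for every positive integer $n$, \[ g_{j,s,1}(n)=g_{j,r,1}(n+\alpha)-qj, \] where $g_{j,s,1}$ and $g_{j,r,1}$ are the sequences defined in the context.
   Context: Fix integers $j\ge1$, $\lambda\ge1$, $s\ge0$. Define a labeled infinite rooted tree $\mathcal K$ as follows. It has "supernodes" $S_0,S_1,S_2,\dots$ with an edge between $S_i$ and $S_{i+1}$ for every $i\ge0$ ($S_0$ is the root). $S_0$ has two further children: the "initial leaf" and a node $N_0$, which is a leaf. For each $i\ge1$, $S_i$ has a child $N_i$ (the "knot node"), and attached to $N_i$ are $\lambda$ chains, each a path of $i\cdot j$ nodes hanging from $N_i$; the last (bottom) node of each chain is a leaf. Each supernode carries $s$ labels and every other node carries exactly one label. The labels are the consecutive positive integers $1,2,3,\dots$, assigned in the following order: initial leaf, $S_0$, $N_0$; then for $i=1,2,3,\dots$: $S_i$ (its $s$ labels), $N_i$, then the nodes of the first chain of $N_i$ from top to bottom, then the second chain, ..., then the $\lambda$-th chain. The initial leaf has weight $1$; every other leaf of $\mathcal K$ (namely $N_0$ and the bottom node of each chain) has weight $j$. The leaf weight sequence $w(n)=w_{j,s,\lambda}(n)$ ($n\ge1$) is the total weight of the leaves of $\mathcal K$ whose label is $\le n$. Explicitly, $w(n)=1+j\cdot\#\{\ell\in L:\ell\le n\}$, where $L$ consists of the number $s+2$ together with the numbers $L_{i,c}=s+2+\sum_{l=1}^{i-1}(s+1+\lambda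 l j)+s+1+c\,i\,j$ for $i\ge1$, $1\le c\le\lambda$. The sequence $g_{j,s,\lambda}$ is defined by $g_{j,s,\lambda}(n)=w_{j,s,\lambda}(n)$ for $1\le n\le 3+2s+\lambda j$ and $g_{j,s,\lambda}(n)=g_{j,s,\lambda}(n-s-g_{j,s,\lambda}(n-j))+\lambda j$ for $n>3+2s+\lambda j$ (this is well defined). The same definitions are applied with $s$ replaced by $r$ to obtain $g_{j,r,1}$. *)

theory Defs
  imports Main
begin

definition Lic :: "nat \<Rightarrow> nat \<Rightarrow> nat \<Rightarrow> nat \<Rightarrow> nat \<Rightarrow> nat" where
  "Lic j s lam i c = s + 2 + (\<Sum>l=1..<i. s + 1 + lam * l * j) + s + 1 + c * i * j"

definition Lset :: "nat \<Rightarrow> nat \<Rightarrow> nat \<Rightarrow> nat set" where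
  "Lset j s lam = {s + 2} \<union> {Lic j s lam i c | i c. 1 \<le> i \<and> 1 \<le> c \<and> c \<le> lam}"

definition wseq :: "nat \<Rightarrow> nat \<Rightarrow> nat \<Rightarrow> nat \<Rightarrow> nat" where
  "wseq j s lam n = 1 + j * card {l \<in> Lset j s lam. l \<le> n}"

text \<open>One step of the recursion: given the list xs = [g(1),...,g(m-1)], compute g(m),
  where m = length xs + 1. Out-of-range recursive calls (which do not occur, since the
  recursion is well defined) are given the arbitrary value 0.\<close>
definition gstep :: "nat \<Rightarrow> nat \<Rightarrow> nat \<Rightarrow> nat list \<Rightarrow> nat" where
  "gstep j s lam xs =
     (let m = length xs + 1 in
      if m \<le> 3 + 2 * s + lam * j then wseq j s lam m
      else (let a = m - j in
            if 1 \<le> a \<and> a < m then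
              (let t = m - s - xs ! (a - 1) in
               if 1 \<le> t \<and> t < m then xs ! (t - 1) + lam * j else 0)
            else 0))"

primrec glist :: "nat \<Rightarrow> nat \<Rightarrow> nat \<Rightarrow> nat \<Rightarrow> nat list" where
  "glist j s lam 0 = []"
| "glist j s lam (Suc n) = glist j s lam n @ [gstep j s lam (glist j s lam n)]"

definition gseq :: "nat \<Rightarrow> nat \<Rightarrow> nat \<Rightarrow> nat \<Rightarrow> nat" where
  "gseq j s lam n = glist j s lam n ! (n - 1)"

end

theory Submission
  imports Defs
begin

definition Lf :: "nat \<Rightarrow> nat \<Rightarrow> nat \<Rightarrow> nat" where
  "Lf j s i = s + 2 + (\<Sum>l\<in>{1..i}. s + 1 + l * j)"

definition cnt :: "nat \<Rightarrow> nat \<Rightarrow> nat \<Rightarrow> nat" where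
  "cnt j s n = (LEAST i. n < Lf j s i)"

lemma Lf_0[simp]: "Lf j s 0 = s + 2"
  by (simp add: Lf_def)

lemma Lf_Suc: "Lf j s (Suc i) = Lf j s i + (s + 1 + Suc i * j)"
  by (simp add: Lf_def)

lemma Lf_gt: "i < Lf j s i"
  by (induction i) (auto simp: Lf_Suc)

lemma Lf_ge: "s + 2 + i * j \<le> Lf j s i"
  by (induction i) (auto simp: Lf_Suc)

lemma Lf_mono: "strict_mono (Lf j s)"
  by (rule strict_mono_Suc_iff[THEN iffD2]) (simp add: Lf_Suc)

lemma Lic_eq: "1 \<le> i \<Longrightarrow> Lic j s 1 i 1 = Lf j s i"
proof -
  assume "1 \<le> i"
  then obtain p where p: "i = Suc p" by (cases i) auto
  have "{1..<Suc p} = {1..p}" by auto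
  then show ?thesis unfolding p Lic_def Lf_Suc by (simp add: Lf_def)
qed

lemma Lset_eq: "Lset j s 1 = range (Lf j s)"
proof
  show "Lset j s 1 \<subseteq> range (Lf j s)"
  proof
    fix x assume "x \<in> Lset j s 1"
    then have "x = s + 2 \<or> (\<exists>i. 1 \<le> i \<and> x = Lic j s 1 i 1)"
      unfolding Lset_def by auto
    then show "x \<in> range (Lf j s)"
    proof
      assume "x = s + 2" then have "x = Lf j s 0" by simp
      then show ?thesis by blast
    next
      assume "\<exists>i. 1 \<le> i \<and> x = Lic j s 1 i 1"
      then obtain i where "1 \<le> i" "x = Lic j s 1 i 1" by blast
      then have "x = Lf j s i" using Lic_eq by simp
      then show ?thesis by blast
    qed
  qed
  show "range (Lf j s) \<subseteq> Lset j s 1"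
  proof
    fix x assume "x \<in> range (Lf j s)"
    then obtain i where x: "x = Lf j s i" by auto
    show "x \<in> Lset j s 1"
    proof (cases "i = 0")
      case True then show ?thesis using x by (simp add: Lset_def)
    next
      case False
      then have "x = Lic j s 1 i 1" using x Lic_eq by simp
      moreover have "1 \<le> i" using False by simp
      ultimately show ?thesis unfolding Lset_def by blast
    qed
  qed
qed

lemma cnt_iff: "Lf j s i \<le> n \<longleftrightarrow> i < cnt j s n"
proof
  assume a: "Lf j s i \<le> n"
  show "i < cnt j s n"
  proof (rule ccontr)
    assume "\<not> i < cnt j s n"
    then have "Lf j s (cnt j s n) \<le> Lf j s i"
      using Lf_mono by (simp add: strict_mono_less_eq)
    moreover have "n < Lf j s (cnt j s n)"
      unfolding cnt_def by (rule LeastI[of _ n]) (rule Lf_gt)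
    ultimately show False using a by simp
  qed
next
  assume "i < cnt j s n"
  then show "Lf j s i \<le> n" unfolding cnt_def using not_less_Least by force
qed

lemma card_cnt: "card {l \<in> Lset j s 1. l \<le> n} = cnt j s n"
proof -
  have "{l \<in> Lset j s 1. l \<le> n} = Lf j s ` {i. Lf j s i \<le> n}"
    unfolding Lset_eq by auto
  also have "{i. Lf j s i \<le> n} = {..<cnt j s n}" using cnt_iff by auto
  finally have "{l \<in> Lset j s 1. l \<le> n} = Lf j s ` {..<cnt j s n}" .
  moreover have "inj (Lf j s)" using Lf_mono strict_mono_imp_inj_on by blast
  ultimately show ?thesis by (simp add: card_image inj_on_subset)
qed

lemma wseq_eq: "wseq j s 1 n = 1 + j * cnt j s n"
  unfolding wseq_def card_cnt ..

lemma cnt_eq: "(\<And>i. i < k \<Longrightarrow> Lf j s i \<le> n) \<Longrightarrow> n < Lf j s k \<Longrightarrow> cnt j s n = k"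
proof -
  assume a: "\<And>i. i < k \<Longrightarrow> Lf j s i \<le> n" and b: "n < Lf j s k"
  have "\<not> cnt j s n < k"
  proof
    assume "cnt j s n < k"
    then have "Lf j s (cnt j s n) \<le> n" using a by blast
    then show False using cnt_iff[of j s "cnt j s n" n] by simp
  qed
  moreover have "\<not> k < cnt j s n" using b cnt_iff[of j s k n] by simp
  ultimately show ?thesis by simp
qed

lemma cnt_eqS: "Lf j s p \<le> n \<Longrightarrow> n < Lf j s (Suc p) \<Longrightarrow> cnt j s n = Suc p"
proof (rule cnt_eq)
  fix i assume "i < Suc p" "Lf j s p \<le> n"
  then have "Lf j s i \<le> Lf j s p" using Lf_mono by (simp add: strict_mono_less_eq)
  then show "Lf j s i \<le> n" using \<open>Lf j s p \<le> n\<close> by simp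
qed

lemma cnt_eq0: "n < Lf j s 0 \<Longrightarrow> cnt j s n = 0"
  by (rule cnt_eq) auto


lemma key:
  assumes j: "j \<ge> 1" and m: "m > 3 + 2 * s + j"
  shows "s + 1 + j * cnt j s (m - j) < m \<and>
         cnt j s (m - (s + 1 + j * cnt j s (m - j))) + 1 = cnt j s m"
proof -
  define k where "k = cnt j s (m - j)"
  have "Lf j s 0 \<le> m - j" using m by simp
  then have "0 < k" unfolding k_def using cnt_iff[of j s 0 "m - j"] by simp
  then obtain p where p: "k = Suc p" by (cases k) auto
  have A: "Lf j s p \<le> m - j" using p k_def cnt_iff[of j s p "m - j"] by simp
  have B: "m - j < Lf j s (Suc p)" using p k_def cnt_iff[of j s "Suc p" "m - j"] by simp
  have BS: "Lf j s (Suc p) = Lf j s p + (s + 1 + j + p * j)" by (simp add: Lf_Suc)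
  have Ag: "s + 2 + p * j \<le> Lf j s p" by (rule Lf_ge)
  have jk: "j * k = j + p * j" using p by simp
  have lt: "s + 1 + j * k < m" using A Ag jk j m by linarith
  define t where "t = m - (s + 1 + j * k)"
  have cm: "cnt j s t + 1 = cnt j s m"
  proof (cases "Lf j s (Suc p) \<le> m")
    case True
    have "Lf j s (Suc (Suc p)) = Lf j s (Suc p) + (s + 1 + Suc (Suc p) * j)" by (rule Lf_Suc)
    then have "m < Lf j s (Suc (Suc p))" using B j by simp
    then have c1: "cnt j s m = Suc (Suc p)" using True by (rule cnt_eqS[rotated])
    have "Lf j s p \<le> t" "t < Lf j s (Suc p)"
      using True B BS A jk lt unfolding t_def by linarith+
    then have "cnt j s t = Suc p" by (rule cnt_eqS)
    then show ?thesis using c1 by simp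
  next
    case False
    then have c1: "cnt j s m = Suc p" using A cnt_eqS[of j s p m] by linarith
    have tA: "t < Lf j s p" using False BS jk lt unfolding t_def by linarith
    show ?thesis
    proof (cases p)
      case 0
      then have "cnt j s t = 0" using tA cnt_eq0 by simp
      then show ?thesis using c1 0 by simp
    next
      case (Suc p')
      have "Lf j s p = Lf j s p' + (s + 1 + j + p' * j)" using Suc by (simp add: Lf_Suc)
      moreover have "p * j = j + p' * j" using Suc by simp
      ultimately have "Lf j s p' \<le> t" using A jk lt m unfolding t_def by linarith
      then have "cnt j s t = Suc p'" using tA Suc cnt_eqS[of j s p' t] by simp
      then show ?thesis using c1 Suc by simp
    qed
  qed
  show ?thesis using lt cm unfolding k_def t_def by simp
qed


lemma length_glist[simp]: "length (glist j s lam n) = n"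
  by (induction n) auto

lemma gseq_Suc: "gseq j s lam (Suc m) = gstep j s lam (glist j s lam m)"
  by (simp add: gseq_def nth_append)

lemma glist_nth: "m < n \<Longrightarrow> glist j s lam n ! m = gseq j s lam (Suc m)"
proof (induction n)
  case 0 then show ?case by simp
next
  case (Suc n)
  show ?case
  proof (cases "m < n")
    case True then show ?thesis using Suc by (simp add: nth_append)
  next
    case False then have "m = n" using Suc by simp
    then show ?thesis by (simp add: gseq_def)
  qed
qed

lemma g_eq_w:
  assumes j: "j \<ge> 1"
  shows "n \<ge> 1 \<Longrightarrow> gseq j s 1 n = wseq j s 1 n"
proof (induction n rule: less_induct)
  case (less n)
  then obtain m where n: "n = Suc m" by (cases n) auto
  show ?case
  proof (cases "n \<le> 3 + 2 * s + j")
    case True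
    then show ?thesis unfolding n gseq_Suc gstep_def by simp
  next
    case False
    define k where "k = cnt j s (n - j)"
    have K: "s + 1 + j * k < n \<and> cnt j s (n - (s + 1 + j * k)) + 1 = cnt j s n"
    proof -
      have "3 + 2 * s + j < n" using False by simp
      from key[OF j this] show ?thesis unfolding k_def .
    qed
    define a where "a = n - j"
    have a1: "1 \<le> a" "a < n" using False j unfolding a_def by auto
    have xa: "glist j s 1 m ! (a - 1) = wseq j s 1 a"
      using glist_nth[of "a - 1" m j s 1] a1 less n by simp
    have wa: "wseq j s 1 a = 1 + j * k" unfolding k_def a_def wseq_eq ..
    define tt where "tt = n - s - (1 + j * k)"
    have t1: "1 \<le> tt" "tt < n" using K unfolding tt_def by auto
    have xt: "glist j s 1 m ! (tt - 1) = wseq j s 1 tt"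
      using glist_nth[of "tt - 1" m j s 1] t1 less n by simp
    have tt': "tt = n - (s + 1 + j * k)" unfolding tt_def by simp
    have "gseq j s 1 n = wseq j s 1 tt + j"
      using False a1 t1 xa xt wa
      unfolding n gseq_Suc gstep_def Let_def a_def tt_def by (simp add: n)
    also have "\<dots> = 1 + j * (cnt j s tt + 1)" unfolding wseq_eq by simp
    also have "\<dots> = wseq j s 1 n" using K unfolding tt' wseq_eq by simp
    finally show ?thesis .
  qed
qed


lemma Lf_base: "Lf j r q = r + 2 + (\<Sum>i<q. r + i * j + 1) + q * j"
  by (induction q) (simp_all add: Lf_Suc)

lemma Lf_shift:
  assumes "s = q * j + r"
  shows "Lf j r (q + k) = Lf j s k + (\<Sum>i<q. r + i * j + 1)"
proof (induction k)
  case 0 then show ?case using assms by (simp add: Lf_base)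
next
  case (Suc k)
  have "Lf j r (q + Suc k) = Lf j r (q + k) + (r + 1 + Suc (q + k) * j)"
    using Lf_Suc[of j r "q + k"] by simp
  also have "\<dots> = Lf j s k + (\<Sum>i<q. r + i * j + 1) + (s + 1 + Suc k * j)"
    using Suc assms by (simp add: algebra_simps)
  also have "\<dots> = Lf j s (Suc k) + (\<Sum>i<q. r + i * j + 1)" by (simp add: Lf_Suc)
  finally show ?case .
qed

lemma cnt_shift:
  assumes s: "s = q * j + r" and q: "q \<ge> 1" and n: "n \<ge> 1"
  shows "cnt j r (n + (\<Sum>i<q. r + i * j + 1)) = q + cnt j s n"
proof (rule cnt_eq)
  define \<alpha> where "\<alpha> = (\<Sum>i<q. r + i * j + 1)"
  fix i assume i: "i < q + cnt j s n"
  show "Lf j r i \<le> n + (\<Sum>i<q. r + i * j + 1)"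
  proof (cases "i < q")
    case True
    obtain q' where q': "q = Suc q'" using q by (cases q) auto
    have "Lf j r q = Lf j r q' + (r + 1 + q * j)" using Lf_Suc[of j r q'] q' by simp
    moreover have "Lf j r q = s + 2 + \<alpha>" using Lf_shift[OF s, of 0] unfolding \<alpha>_def by simp
    ultimately have "Lf j r q' = \<alpha> + 1" using s by simp
    moreover have "Lf j r i \<le> Lf j r q'" using True q' Lf_mono by (simp add: strict_mono_less_eq)
    ultimately show ?thesis using n unfolding \<alpha>_def by simp
  next
    case False
    then obtain k where k: "i = q + k" by (metis le_add_diff_inverse not_less)
    then have "k < cnt j s n" using i by simp
    then have "Lf j s k \<le> n" using cnt_iff[of j s k n] by simp
    then show ?thesis using Lf_shift[OF s, of k] k by simp
  qed
next
  have "n < Lf j s (cnt j s n)" using cnt_iff[of j s "cnt j s n" n] by simp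
  then show "n + (\<Sum>i<q. r + i * j + 1) < Lf j r (q + cnt j s n)"
    using Lf_shift[OF s, of "cnt j s n"] by simp
qed

theorem theorem4p3:
  fixes j s q r n :: nat
  assumes "j \<ge> 1" and "s \<ge> j"
    and "s = q * j + r" and "q \<ge> 1" and "r < j"
    and "n \<ge> 1"
  shows "int (gseq j s 1 n)
         = int (gseq j r 1 (n + (\<Sum>i<q. r + i * j + 1))) - int (q * j)"
proof -
  have "gseq j s 1 n = 1 + j * cnt j s n" using g_eq_w[OF assms(1) assms(6)] wseq_eq by simp
  moreover have "gseq j r 1 (n + (\<Sum>i<q. r + i * j + 1)) = 1 + j * (q + cnt j s n)"
    using g_eq_w[OF assms(1), of "n + (\<Sum>i<q. r + i * j + 1)" r] assms(6)
      wseq_eq cnt_shift[OF assms(3) assms(4) assms(6)] by simp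
  ultimately show ?thesis by (simp add: algebra_simps)
qed

end
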